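(* Let $q$ be a prime power, $m\ge1$, and let $\mathrm{Tr}:\mathrm{GF}(q^m)\to\mathrm{GF}(q)$, $\mathrm{Tr}(a)=a+a^q+\cdots+a^{q^{m-1}}$, be the trace map. Let $a_0,a_1,\ldots,a_{q-1}\in\mathrm{GF}(q^m)$. Then $\mathrm{Tr}(a_0+\lambda a_1+\lambda^2a_2+\cdots+\lambda^{q-1}a_{q-1})=0$ for all $\lambda\in\mathrm{GF}(q^m)$ if and only if $\mathrm{Tr}(a_0)=0$ and $a_1=a_2=\cdots=a_{q-1}=0$. *)

theory Defs
  imports Main "HOL-Computational_Algebra.Primes"
begin

text \<open>The finite field GF(q^m) is modelled as a finite field type of cardinality q^m;
  GF(q) is its unique subfield of order q, so Tr(a) = 0 is an equation in the big field.\<close>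
definition gf_trace :: "nat \<Rightarrow> nat \<Rightarrow> 'a::field \<Rightarrow> 'a" where
  "gf_trace q m a = (\<Sum>i<m. a ^ (q ^ i))"

end

theory Submission
  imports Defs "HOL-Number_Theory.Residues" "HOL-Computational_Algebra.Polynomial"
begin

lemma char_eq:
  assumes "prime p" "k \<ge> 1" "card (UNIV :: 'a::{field,finite} set) = p ^ n"
  shows "CHAR('a) = p"
proof -
  have pr: "prime CHAR('a)"
  proof -
    have "CHAR('a) > 0" by (rule finite_imp_CHAR_pos) simp
    thus ?thesis by (rule prime_CHAR_semidom)
  qed
  have "CHAR('a) dvd p ^ n" using CHAR_dvd_CARD assms(3) by metis
  hence "CHAR('a) dvd p" using pr prime_dvd_power by blast
  thus ?thesis using pr assms(1) primes_dvd_imp_eq by blast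
qed

theorem lemma2:
  fixes a :: "nat \<Rightarrow> 'a::{field,finite}" and q m :: nat
  assumes "\<exists>p k. prime p \<and> k \<ge> 1 \<and> q = p ^ k"
    and "m \<ge> 1"
    and "card (UNIV :: 'a set) = q ^ m"
  shows "(\<forall>l::'a. gf_trace q m (\<Sum>i<q. l ^ i * a i) = 0) \<longleftrightarrow>
         (gf_trace q m (a 0) = 0 \<and> (\<forall>i\<in>{1..q-1}. a i = 0))"
proof -
  obtain p k where pk: "prime p" "k \<ge> 1" "q = p ^ k" using assms(1) by blast
  have "p^1 \<le> p^k" using pk prime_gt_0_nat[of p] by (intro power_increasing) auto
  hence q2: "q \<ge> 2" using pk prime_ge_2_nat[of p] by simp
  have "card (UNIV :: 'a set) = p ^ (k*m)" using assms(3) pk by (simp add: power_mult)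
  hence ch: "CHAR('a) = p" using char_eq[OF pk(1) pk(2)] by blast
  have prc: "prime CHAR('a)" using ch pk by simp
  have frob: "sum f A ^ (q^j) = (\<Sum>i\<in>A. f i ^ (q^j))" for f :: "nat \<Rightarrow> 'a" and A j
    by (rule freshmans_dream_sum'[OF prc, of _ "k*j"]) (simp add: ch pk power_mult)
  show ?thesis
  proof
    assume H: "\<forall>l::'a. gf_trace q m (\<Sum>i<q. l ^ i * a i) = 0"
    define P :: "'a poly" where "P = (\<Sum>j<m. \<Sum>i<q. monom (a i ^ (q^j)) (i*q^j))"
    have coeffP: "coeff P n = (\<Sum>j<m. \<Sum>i<q. if i*q^j = n then a i ^ (q^j) else 0)" for n
      unfolding P_def by (simp add: coeff_sum coeff_monom)
    have polyP: "poly P l = gf_trace q m (\<Sum>i<q. l ^ i * a i)" for l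
      unfolding P_def gf_trace_def
      by (simp add: poly_sum poly_monom frob power_mult_distrib power_mult mult.commute)
    have lt: "i*q^j < q^m" if "i < q" "j < m" for i j
    proof -
      have "i*q^j < q*q^j" using that q2 by simp
      also have "\<dots> = q^(Suc j)" by simp
      also have "\<dots> \<le> q^m" using that q2 by (intro power_increasing) auto
      finally show ?thesis .
    qed
    have degP: "degree P < q^m"
    proof -
      have "degree P \<le> q^m - 1"
      proof (rule degree_le, intro allI impI)
        fix n assume "q^m - 1 < n"
        hence "q^m \<le> n" by simp
        thus "coeff P n = 0" unfolding coeffP using lt
          by (intro sum.neutral ballI) (auto dest!: lt[of _ _] simp: less_le_trans)
      qed
      moreover have "q^m > 0" using q2 by simp
      ultimately show ?thesis by linarith
    qed
    have P0: "P = 0"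
    proof (rule ccontr)
      assume "P \<noteq> 0"
      hence "card {x. poly P x = 0} \<le> degree P" by (rule card_poly_roots_bound)
      moreover have "{x. poly P x = 0} = UNIV" using H polyP by auto
      ultimately show False using degP assms(3) by simp
    qed
    have "coeff P 0 = gf_trace q m (a 0)"
    proof -
      have "coeff P 0 = (\<Sum>j<m. \<Sum>i<q. if i = 0 then a i ^ (q^j) else 0)"
        unfolding coeffP using q2 by (intro sum.cong refl) auto
      also have "\<dots> = (\<Sum>j<m. a 0 ^ (q^j))" using q2 by (simp add: sum.delta)
      finally show ?thesis by (simp add: gf_trace_def)
    qed
    moreover have "coeff P i0 = a i0" if "i0 \<in> {1..q-1}" for i0
    proof -
      have "coeff P i0 = (\<Sum>j<m. if j = 0 then a i0 else 0)"
        unfolding coeffP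
      proof (intro sum.cong refl)
        fix j assume "j \<in> {..<m}"
        show "(\<Sum>i<q. if i*q^j = i0 then a i ^ (q^j) else 0) = (if j = 0 then a i0 else 0)"
        proof (cases "j = 0")
          case True
          have "i0 < q" using that q2 by auto
          then show ?thesis using True by (simp add: sum.delta')
        next
          case False
          have "q^1 \<le> q^j" using False q2 by (intro power_increasing) auto
          hence qj: "q \<le> q^j" by simp
          have "i*q^j \<noteq> i0" for i
          proof (cases "i = 0")
            case True then show ?thesis using that by simp
          next
            case False
            hence "q^j \<le> i*q^j" by simp
            moreover have "i0 < q" using that q2 by auto
            ultimately show ?thesis using qj by linarith
          qed
          hence "\<forall>i. i*q^j \<noteq> i0" by blast
          then show ?thesis using False by simp
        qed
      qed
      also have "\<dots> = a i0" using assms(2) by (simp add: sum.delta)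
      finally show ?thesis .
    qed
    ultimately show "gf_trace q m (a 0) = 0 \<and> (\<forall>i\<in>{1..q-1}. a i = 0)"
      using P0 by auto
  next
    assume H: "gf_trace q m (a 0) = 0 \<and> (\<forall>i\<in>{1..q-1}. a i = 0)"
    have "(\<Sum>i<q. l ^ i * a i) = a 0" for l :: 'a
    proof -
      have "(\<Sum>i<q. l ^ i * a i) = (\<Sum>i<q. if i = 0 then a 0 else 0)"
        using H by (intro sum.cong refl) (auto simp: Suc_le_eq)
      also have "\<dots> = a 0" using q2 by (simp add: sum.delta)
      finally show ?thesis .
    qed
    thus "\<forall>l::'a. gf_trace q m (\<Sum>i<q. l ^ i * a i) = 0" using H by simp
  qed
qed

end
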